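(* Let $\mathbf{F}\in\{\mathbf{R},\mathbf{C}\}$, let $A_1,\dots,A_n\in\mathbf{H}_d$ be positive semidefinite, let $Z_*\in\mathbf{H}_d$ be positive semidefinite of rank $r\ge1$, let $\xi\in\mathbf{R}^n$ and $y=\mathcal{A}(Z_* )+\xi$. Let $X_*\in\mathbf{F}^{d\times r}$ satisfy $Z_*=X_*X_*^*$. Let $X\in\mathbf{F}^{d\times p}$ be a second-order critical point of $f_p(X)=\|y-\mathcal{A}(XX^* )\|^2$. Then for every $R\in\mathbf{F}^{p\times r}$, $$\|\mathcal{A}(XX^*-Z_* )\|^2\le\langle\xi,\mathcal{A}(XX^*-Z_* )\rangle+\frac{2}{p+2}\big\langle y,\mathcal{A}((X_*-XR)(X_*-XR)^* )\big\rangle\le\langle\xi,\mathcal{A}(XX^*-Z_* )\rangle+\frac{2\|\mathcal{A}^*(y)\|_{\mathrm{op}}}{p+2}\|X_*-XR\|_F^2 .$$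
   Context: $\mathbf{H}_d$: $d\times d$ Hermitian matrices over $\mathbf{F}$ with real Frobenius inner product $\langle A,B\rangle=\operatorname{Re}\operatorname{tr}(A^*B)$. $\mathcal{A}(S)=(\langle A_1,S\rangle,\dots,\langle A_n,S\rangle)\in\mathbf{R}^n$, $\mathcal{A}^*(z)=\sum_iz_iA_i$. A second-order critical point is a point where the gradient is zero and the Hessian is positive semidefinite (in the complex case, with respect to the real and imaginary parts of $X$). *)

theory Defs
  imports Complex_Main "Jordan_Normal_Form.DL_Rank"
begin

text \<open>Matrices over F are represented as complex matrices whose entries lie in a
  set K, where K is either the reals (F = R) or all complex numbers (F = C).\<close>

definition field_choice :: "complex set \<Rightarrow> bool" where
  "field_choice K \<longleftrightarrow> K = \<real> \<or> K = UNIV"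

definition entries_in :: "complex set \<Rightarrow> complex mat \<Rightarrow> bool" where
  "entries_in K M \<longleftrightarrow> (\<forall>i<dim_row M. \<forall>j<dim_col M. M $$ (i,j) \<in> K)"

definition vec_entries_in :: "complex set \<Rightarrow> complex vec \<Rightarrow> bool" where
  "vec_entries_in K v \<longleftrightarrow> (\<forall>i<dim_vec v. v $ i \<in> K)"

definition adj :: "complex mat \<Rightarrow> complex mat" where
  "adj M = mat (dim_col M) (dim_row M) (\<lambda>(i,j). cnj (M $$ (j,i)))"

definition mtrace :: "complex mat \<Rightarrow> complex" where
  "mtrace M = (\<Sum>i<dim_row M. M $$ (i,i))"

definition hinner :: "complex mat \<Rightarrow> complex mat \<Rightarrow> real" where
  "hinner A B = Re (mtrace (adj A * B))"

definition hermitian :: "nat \<Rightarrow> complex mat \<Rightarrow> bool" where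
  "hermitian d A \<longleftrightarrow> A \<in> carrier_mat d d \<and> adj A = A"

definition psd :: "complex set \<Rightarrow> nat \<Rightarrow> complex mat \<Rightarrow> bool" where
  "psd K d A \<longleftrightarrow> hermitian d A \<and>
     (\<forall>v \<in> carrier_vec d. vec_entries_in K v \<longrightarrow>
        0 \<le> Re (\<Sum>i<d. cnj (v $ i) * (A *\<^sub>v v) $ i))"

definition meas :: "(nat \<Rightarrow> complex mat) \<Rightarrow> complex mat \<Rightarrow> nat \<Rightarrow> real" where
  "meas As S i = hinner (As i) S"

definition meas_adj :: "nat \<Rightarrow> nat \<Rightarrow> (nat \<Rightarrow> complex mat) \<Rightarrow> (nat \<Rightarrow> real) \<Rightarrow> complex mat" where
  "meas_adj d n As z = mat d d (\<lambda>(i,j). \<Sum>k<n. complex_of_real (z k) * As k $$ (i,j))"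

definition vnorm :: "complex vec \<Rightarrow> real" where
  "vnorm v = sqrt (\<Sum>i<dim_vec v. (cmod (v $ i))\<^sup>2)"

definition op_norm :: "complex set \<Rightarrow> complex mat \<Rightarrow> real" where
  "op_norm K M = Sup {vnorm (M *\<^sub>v v) | v. v \<in> carrier_vec (dim_col M) \<and>
                                            vec_entries_in K v \<and> vnorm v \<le> 1}"

definition frob_sq :: "complex mat \<Rightarrow> real" where
  "frob_sq M = (\<Sum>i<dim_row M. \<Sum>j<dim_col M. (cmod (M $$ (i,j)))\<^sup>2)"

definition fobj :: "nat \<Rightarrow> (nat \<Rightarrow> complex mat) \<Rightarrow> (nat \<Rightarrow> real) \<Rightarrow> complex mat \<Rightarrow> real" where
  "fobj n As y X = (\<Sum>i<n. (y i - meas As (X * adj X) i)\<^sup>2)"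

text \<open>Second-order critical point of f_p on F^{d x p}: for every direction V \<in> F^{d x p},
  the function t \<mapsto> f_p(X + tV) has zero derivative and nonnegative second derivative
  at t = 0 (i.e. gradient zero and Hessian PSD w.r.t. the real parameters of X).\<close>
definition second_order_critical ::
  "complex set \<Rightarrow> nat \<Rightarrow> nat \<Rightarrow> nat \<Rightarrow> (nat \<Rightarrow> complex mat) \<Rightarrow> (nat \<Rightarrow> real) \<Rightarrow> complex mat \<Rightarrow> bool" where
  "second_order_critical K d p n As y X \<longleftrightarrow>
     X \<in> carrier_mat d p \<and> entries_in K X \<and>
     (\<forall>V \<in> carrier_mat d p. entries_in K V \<longrightarrow>
        (let g = (\<lambda>t::real. fobj n As y (X + complex_of_real t \<cdot>\<^sub>m V)) in
          (g has_real_derivative 0) (at 0) \<and>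
          (\<exists>g' s. (\<forall>t. (g has_real_derivative g' t) (at t)) \<and>
                  (g' has_real_derivative s) (at 0) \<and> 0 \<le> s)))"

end

theory Submission imports Defs "HOL-Analysis.L2_Norm" begin

lemma K_closed:
  assumes "field_choice K"
  shows "a \<in> K \<Longrightarrow> b \<in> K \<Longrightarrow> a + b \<in> K"
    and "a \<in> K \<Longrightarrow> b \<in> K \<Longrightarrow> a - b \<in> K"
    and "a \<in> K \<Longrightarrow> b \<in> K \<Longrightarrow> a * b \<in> K"
    and "a \<in> K \<Longrightarrow> cnj a \<in> K"
    and "complex_of_real t \<in> K"
    and "0 \<in> K"
  using assms unfolding field_choice_def
  by (auto simp: Reals_cnj_iff)

definition qf :: "nat \<Rightarrow> complex mat \<Rightarrow> (nat \<Rightarrow> complex) \<Rightarrow> (nat \<Rightarrow> complex) \<Rightarrow> real" where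
  "qf d A u w = (\<Sum>a<d. \<Sum>b<d. Re (cnj (w a) * A $$ (a,b) * u b))"

lemma qf_cong: "(\<And>a. a < d \<Longrightarrow> u a = u' a) \<Longrightarrow> (\<And>a. a < d \<Longrightarrow> w a = w' a) \<Longrightarrow> qf d A u w = qf d A u' w'"
  unfolding qf_def by (intro sum.cong) auto

lemma herm_entry: assumes "hermitian d A" "a < d" "b < d"
  shows "A $$ (b,a) = cnj (A $$ (a,b))"
proof -
  have c: "dim_row A = d" "dim_col A = d" and e: "adj A = A" using assms(1) unfolding hermitian_def by auto
  have "A $$ (b,a) = adj A $$ (b,a)" by (subst e) (rule refl)
  also have "\<dots> = cnj (A $$ (a,b))" unfolding adj_def using c assms(2,3) by simp
  finally show ?thesis .
qed

lemma qf_sym: assumes "hermitian d A" shows "qf d A u w = qf d A w u"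
proof -
  have h: "A $$ (b,a) = cnj (A $$ (a,b))" if "a < d" "b < d" for a b
    using herm_entry[OF assms that] .
  have "qf d A u w = (\<Sum>a<d. \<Sum>b<d. Re (cnj (u b) * A $$ (b,a) * w a))"
    unfolding qf_def
  proof (intro sum.cong refl)
    fix a b assume "a \<in> {..<d}" "b \<in> {..<d}"
    then have "cnj (u b) * A $$ (b,a) * w a = cnj (cnj (w a) * A $$ (a,b) * u b)" using h[of a b] by simp
    then have "Re (cnj (u b) * A $$ (b,a) * w a) = Re (cnj (cnj (w a) * A $$ (a,b) * u b))" by (rule arg_cong)
    then show "Re (cnj (w a) * A $$ (a,b) * u b) = Re (cnj (u b) * A $$ (b,a) * w a)" by (simp only: cnj.sel(1))
  qed
  also have "\<dots> = qf d A w u" unfolding qf_def by (rule sum.swap)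
  finally show ?thesis .
qed

lemma qf_add1: "qf d A (\<lambda>a. u a + v a) w = qf d A u w + qf d A v w"
  unfolding qf_def by (simp add: distrib_left distrib_right sum.distrib)
lemma qf_diff1: "qf d A (\<lambda>a. u a - v a) w = qf d A u w - qf d A v w"
  unfolding qf_def by (simp add: right_diff_distrib left_diff_distrib sum_subtractf)
lemma qf_add2: "qf d A u (\<lambda>a. v a + w a) = qf d A u v + qf d A u w"
  unfolding qf_def by (simp add: distrib_left distrib_right sum.distrib)
lemma qf_diff2: "qf d A u (\<lambda>a. v a - w a) = qf d A u v - qf d A u w"
  unfolding qf_def by (simp add: right_diff_distrib left_diff_distrib sum_subtractf)
lemma qf_scale1: "qf d A (\<lambda>a. c * u a) w = qf d A u (\<lambda>a. cnj c * w a)"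
  unfolding qf_def by (simp add: ac_simps)
lemma Re_ofreal_mult: "Re (complex_of_real t * z) = t * Re z" by simp

lemma qf_rscale1: "qf d A (\<lambda>a. complex_of_real t * u a) w = t * qf d A u w"
  unfolding qf_def sum_distrib_left
  by (intro sum.cong refl) (simp add: algebra_simps)
lemma qf_rscale2: "qf d A u (\<lambda>a. complex_of_real t * w a) = t * qf d A u w"
  unfolding qf_def sum_distrib_left
  by (intro sum.cong refl) (simp add: algebra_simps)
lemma qf_zero1: "qf d A (\<lambda>a. 0) w = 0"
  unfolding qf_def by simp
lemma qf_zero2: "qf d A u (\<lambda>a. 0) = 0"
  unfolding qf_def by simp
lemma qf_sum1: "qf d A (\<lambda>a. \<Sum>k\<in>S. f k a) w = (\<Sum>k\<in>S. qf d A (f k) w)"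
  unfolding qf_def by (simp add: sum_distrib_left sum_distrib_right sum.swap[of _ S])

lemma hinner_herm: assumes "hermitian d A" "M \<in> carrier_mat d d"
  shows "hinner A M = (\<Sum>i<d. \<Sum>j<d. Re (A $$ (i,j) * M $$ (j,i)))"
proof -
  have e: "adj A = A" and c: "A \<in> carrier_mat d d" using assms(1) unfolding hermitian_def by auto
  have "hinner A M = Re (\<Sum>i<d. (A * M) $$ (i,i))"
    unfolding hinner_def mtrace_def e using c by simp
  also have "\<dots> = (\<Sum>i<d. \<Sum>j<d. Re (A $$ (i,j) * M $$ (j,i)))"
    unfolding Re_sum
  proof (intro sum.cong refl)
    fix i assume i: "i \<in> {..<d}"
    have "(A * M) $$ (i,i) = (\<Sum>j<d. A $$ (i,j) * M $$ (j,i))"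
      using c assms(2) i by (simp add: scalar_prod_def atLeast0LessThan)
    then show "Re ((A * M) $$ (i,i)) = (\<Sum>j<d. Re (A $$ (i,j) * M $$ (j,i)))"
      by (simp add: Re_sum)
  qed
  finally show ?thesis .
qed

lemma meas_prod: assumes "hermitian d A" "U \<in> carrier_mat d m" "W \<in> carrier_mat d m"
  shows "hinner A (U * adj W) = (\<Sum>k<m. qf d A (\<lambda>a. U $$ (a,k)) (\<lambda>a. W $$ (a,k)))"
proof -
  have aw: "adj W \<in> carrier_mat m d" using assms(3) unfolding adj_def by auto
  have "hinner A (U * adj W) = (\<Sum>i<d. \<Sum>j<d. Re (A $$ (i,j) * (U * adj W) $$ (j,i)))"
    using hinner_herm[OF assms(1)] aw assms(2) by simp
  also have "\<dots> = (\<Sum>i<d. \<Sum>j<d. \<Sum>k<m. Re (cnj (W $$ (i,k)) * A $$ (i,j) * U $$ (j,k)))"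
  proof (intro sum.cong refl)
    fix i j assume i: "i \<in> {..<d}" and j: "j \<in> {..<d}"
    have "(U * adj W) $$ (j,i) = (\<Sum>k<m. U $$ (j,k) * cnj (W $$ (i,k)))"
      using assms(2,3) aw i j by (simp add: scalar_prod_def atLeast0LessThan adj_def)
    then show "Re (A $$ (i,j) * (U * adj W) $$ (j,i)) = (\<Sum>k<m. Re (cnj (W $$ (i,k)) * A $$ (i,j) * U $$ (j,k)))"
      by (simp add: sum_distrib_left Re_sum ac_simps del: times_complex.sel)
  qed
  also have "\<dots> = (\<Sum>k<m. qf d A (\<lambda>a. U $$ (a,k)) (\<lambda>a. W $$ (a,k)))"
    unfolding qf_def
    by (simp add: sum.swap[of _ "{..<m}"])
  finally show ?thesis .
qed

lemma psd_qf: assumes "psd K d A" "\<And>a. a < d \<Longrightarrow> u a \<in> K"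
  shows "0 \<le> qf d A u u"
proof -
  have c: "A \<in> carrier_mat d d" using assms(1) unfolding psd_def hermitian_def by auto
  have "vec_entries_in K (vec d u)" using assms(2) unfolding vec_entries_in_def by simp
  then have "0 \<le> Re (\<Sum>i<d. cnj (vec d u $ i) * (A *\<^sub>v vec d u) $ i)"
    using assms(1) unfolding psd_def by auto
  also have "\<dots> = qf d A u u"
    unfolding qf_def Re_sum
  proof (intro sum.cong refl)
    fix i assume i: "i \<in> {..<d}"
    have "(A *\<^sub>v vec d u) $ i = (\<Sum>j<d. A $$ (i,j) * u j)"
      using c i by (simp add: scalar_prod_def atLeast0LessThan)
    then show "Re (cnj (vec d u $ i) * (A *\<^sub>v vec d u) $ i) = (\<Sum>j<d. Re (cnj (u i) * A $$ (i,j) * u j))"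
      using i by (simp add: sum_distrib_left Re_sum mult.assoc del: times_complex.sel)
  qed
  finally show ?thesis .
qed

lemma qf_expand:
  "qf d A (\<lambda>a. x a + complex_of_real t * v a) (\<lambda>a. x a + complex_of_real t * v a)
   = qf d A x x + t * (qf d A x v + qf d A v x) + t^2 * qf d A v v"
  unfolding qf_add1 qf_add2 qf_rscale1 qf_rscale2 by (simp add: algebra_simps power2_eq_square)

lemma quad_nonneg: fixes a b c :: real
  assumes "\<And>t. 0 \<le> c + 2 * t * b + t^2 * a" "0 \<le> a"
  shows "b^2 \<le> a * c"
proof (cases "a = 0")
  case True
  show ?thesis
  proof (rule ccontr)
    assume "\<not> ?thesis"
    then have "b \<noteq> 0" using True by simp
    have "0 \<le> c + 2 * (- (c + 1) / (2 * b)) * b + (- (c + 1) / (2 * b))^2 * a" by (rule assms(1))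
    also have "\<dots> = c + 2 * (- (c + 1) / (2 * b)) * b" using True by simp
    also have "\<dots> = -1" using \<open>b \<noteq> 0\<close> by (simp add: field_simps)
    finally show False by simp
  qed
next
  case False
  then have ap: "a > 0" using assms(2) by simp
  have "0 \<le> c + 2 * (- b / a) * b + (- b / a)^2 * a" by (rule assms(1))
  also have "\<dots> = c - b^2 / a" using ap by (simp add: field_simps power2_eq_square)
  finally show ?thesis using ap by (simp add: field_simps)
qed

lemma qf_cs: assumes "psd K d A" "field_choice K"
  "\<And>a. a < d \<Longrightarrow> u a \<in> K" "\<And>a. a < d \<Longrightarrow> x a \<in> K"
  shows "(qf d A x u)^2 \<le> qf d A x x * qf d A u u"
proof (rule quad_nonneg)
  have h: "hermitian d A" using assms(1) unfolding psd_def by auto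
  fix t :: real
  have "0 \<le> qf d A (\<lambda>a. u a + complex_of_real t * x a) (\<lambda>a. u a + complex_of_real t * x a)"
    by (rule psd_qf[OF assms(1)]) (simp add: K_closed[OF assms(2)] assms(3,4))
  also have "\<dots> = qf d A u u + 2 * t * qf d A x u + t^2 * qf d A x x"
    unfolding qf_expand using qf_sym[OF h, of u x] by simp
  finally show "0 \<le> qf d A u u + 2 * t * qf d A x u + t^2 * qf d A x x" .
next
  show "0 \<le> qf d A x x" by (rule psd_qf[OF assms(1)]) (simp add: assms(4))
qed

lemma gterm: fixes P b c x :: real
  shows "((\<lambda>t. (P - t * b - t^2 * c)^2) has_real_derivative
     (2 * (P - x * b - x^2 * c) * (- b - 2 * x * c))) (at x)"
  apply (rule derivative_eq_intros refl)+
  apply (simp add: power2_eq_square)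
  done
lemma gterm2: fixes P b c :: real
  shows "((\<lambda>x. 2 * (P - x * b - x^2 * c) * (- b - 2 * x * c)) has_real_derivative
     (2 * b^2 - 4 * P * c)) (at 0)"
  apply (rule derivative_eq_intros refl)+
  apply (simp add: power2_eq_square)
  done

lemma gderiv: fixes P b c :: "nat \<Rightarrow> real"
  shows "((\<lambda>t. \<Sum>i<n. (P i - t * b i - t^2 * c i)^2) has_real_derivative
     (\<Sum>i<n. 2 * (P i - x * b i - x^2 * c i) * (- b i - 2 * x * c i))) (at x)"
  by (rule DERIV_sum) (rule gterm)

lemma g'deriv: fixes P b c :: "nat \<Rightarrow> real"
  shows "((\<lambda>x. \<Sum>i<n. 2 * (P i - x * b i - x^2 * c i) * (- b i - 2 * x * c i)) has_real_derivative
     (\<Sum>i<n. 2 * (b i)^2 - 4 * P i * c i)) (at 0)"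
  by (rule DERIV_sum) (rule gterm2)

lemma deriv_first: fixes P b c :: "nat \<Rightarrow> real"
  assumes "((\<lambda>t. \<Sum>i<n. (P i - t * b i - t^2 * c i)^2) has_real_derivative 0) (at 0)"
  shows "(\<Sum>i<n. P i * b i) = 0"
proof -
  have "(\<Sum>i<n. 2 * (P i - 0 * b i - 0^2 * c i) * (- b i - 2 * 0 * c i)) = 0"
    using DERIV_unique[OF gderiv assms] .
  then have "(\<Sum>i<n. (- 2) * (P i * b i)) = 0" by (simp add: mult.assoc)
  then have "(- 2) * (\<Sum>i<n. P i * b i) = 0" by (simp only: sum_distrib_left)
  then show ?thesis by simp
qed

lemma deriv_second: fixes P b c :: "nat \<Rightarrow> real"
  assumes "\<forall>t. ((\<lambda>t. \<Sum>i<n. (P i - t * b i - t^2 * c i)^2) has_real_derivative g' t) (at t)"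
    and "(g' has_real_derivative s) (at 0)"
  shows "s = (\<Sum>i<n. 2 * (b i)^2 - 4 * P i * c i)"
proof -
  have "g' = (\<lambda>x. \<Sum>i<n. 2 * (P i - x * b i - x^2 * c i) * (- b i - 2 * x * c i))"
  proof
    fix x show "g' x = (\<Sum>i<n. 2 * (P i - x * b i - x^2 * c i) * (- b i - 2 * x * c i))"
      using DERIV_unique[OF spec[OF assms(1), of x] gderiv] .
  qed
  then have "(g' has_real_derivative (\<Sum>i<n. 2 * (b i)^2 - 4 * P i * c i)) (at 0)"
    using g'deriv by simp
  then show ?thesis using DERIV_unique[OF assms(2)] by blast
qed

lemma vnorm_scale: "vnorm (complex_of_real r \<cdot>\<^sub>v x) = \<bar>r\<bar> * vnorm x"
proof -
  have "(\<Sum>i<dim_vec x. (cmod ((complex_of_real r \<cdot>\<^sub>v x) $ i))\<^sup>2) = r^2 * (\<Sum>i<dim_vec x. (cmod (x $ i))\<^sup>2)"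
    by (simp add: sum_distrib_left norm_mult power_mult_distrib)
  then show ?thesis unfolding vnorm_def by (simp add: real_sqrt_mult)
qed

lemma vnorm_entry: assumes "i < dim_vec v" shows "cmod (v $ i) \<le> vnorm v"
proof -
  have "(cmod (v $ i))\<^sup>2 \<le> (\<Sum>j<dim_vec v. (cmod (v $ j))\<^sup>2)"
    by (rule member_le_sum) (use assms in auto)
  then have "sqrt ((cmod (v $ i))\<^sup>2) \<le> vnorm v" unfolding vnorm_def by (rule real_sqrt_le_mono)
  then show ?thesis by simp
qed

lemma opnorm_bdd: assumes "B \<in> carrier_mat d d"
  shows "bdd_above {vnorm (B *\<^sub>v v) | v. v \<in> carrier_vec (dim_col B) \<and> vec_entries_in K v \<and> vnorm v \<le> 1}"
proof (rule bdd_aboveI, clarify)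
  fix v :: "complex vec" assume v: "v \<in> carrier_vec (dim_col B)" "vnorm v \<le> 1"
  have dv: "dim_vec v = d" using v assms by auto
  have e: "cmod ((B *\<^sub>v v) $ i) \<le> (\<Sum>j<d. cmod (B $$ (i,j)))" if i: "i < d" for i
  proof -
    have "(B *\<^sub>v v) $ i = (\<Sum>j<d. B $$ (i,j) * v $ j)"
      using assms i dv by (simp add: scalar_prod_def atLeast0LessThan)
    then have "cmod ((B *\<^sub>v v) $ i) \<le> (\<Sum>j<d. cmod (B $$ (i,j) * v $ j))"
      by (simp add: norm_sum)
    also have "\<dots> \<le> (\<Sum>j<d. cmod (B $$ (i,j)))"
    proof (rule sum_mono)
      fix j assume "j \<in> {..<d}"
      then have "cmod (v $ j) \<le> 1" using vnorm_entry[of j v] v dv by auto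
      then show "cmod (B $$ (i,j) * v $ j) \<le> cmod (B $$ (i,j))"
        by (simp add: norm_mult mult_left_le)
    qed
    finally show ?thesis .
  qed
  have "vnorm (B *\<^sub>v v) = sqrt (\<Sum>i<d. (cmod ((B *\<^sub>v v) $ i))\<^sup>2)"
    unfolding vnorm_def using assms by simp
  also have "\<dots> \<le> sqrt (\<Sum>i<d. (\<Sum>j<d. cmod (B $$ (i,j)))\<^sup>2)"
    by (intro real_sqrt_le_mono sum_mono power_mono e) auto
  finally show "vnorm (B *\<^sub>v v) \<le> sqrt (\<Sum>i<d. (\<Sum>j<d. cmod (B $$ (i,j)))\<^sup>2)" .
qed

lemma opnorm_vec: assumes F: "field_choice K" and B: "B \<in> carrier_mat d d"
  and v: "v \<in> carrier_vec d" "vec_entries_in K v"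
  shows "vnorm (B *\<^sub>v v) \<le> op_norm K B * vnorm v"
proof (cases "vnorm v = 0")
  case True
  have "\<forall>i<d. cmod (v $ i) = 0" using vnorm_entry[of _ v] True v(1) by (auto intro: antisym)
  then have "v = 0\<^sub>v d" using v(1) by (auto intro!: eq_vecI)
  then have "B *\<^sub>v v = 0\<^sub>v d" using B by auto
  then have "vnorm (B *\<^sub>v v) = 0" unfolding vnorm_def by simp
  then show ?thesis using True by simp
next
  case False
  define N where "N = vnorm v"
  have "vnorm v \<ge> 0" unfolding vnorm_def by (simp add: sum_nonneg)
  then have Npos: "N > 0" using False unfolding N_def by linarith
  define w where "w = complex_of_real (1 / N) \<cdot>\<^sub>v v"
  have wc: "w \<in> carrier_vec d" using v unfolding w_def by simp
  have wK: "vec_entries_in K w" unfolding vec_entries_in_def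
  proof (intro allI impI)
    fix i assume "i < dim_vec w"
    then have i: "i < d" using wc by simp
    have "w $ i = complex_of_real (1 / N) * v $ i" unfolding w_def using v(1) i by simp
    moreover have "v $ i \<in> K" using v i unfolding vec_entries_in_def by auto
    ultimately show "w $ i \<in> K" using K_closed(3)[OF F K_closed(5)[OF F], of "v $ i" "1 / N"] by (simp only:)
  qed
  have wn: "vnorm w = 1" unfolding w_def vnorm_scale using Npos unfolding N_def by simp
  have "B *\<^sub>v w = complex_of_real (1 / N) \<cdot>\<^sub>v (B *\<^sub>v v)"
    unfolding w_def using B v(1) by (simp add: mult_mat_vec)
  then have "vnorm (B *\<^sub>v w) = \<bar>1 / N\<bar> * vnorm (B *\<^sub>v v)"
    by (simp only: vnorm_scale)
  then have bw: "vnorm (B *\<^sub>v w) = vnorm (B *\<^sub>v v) / N"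
    using Npos by simp
  have "vnorm (B *\<^sub>v w) \<le> op_norm K B"
    unfolding op_norm_def
    by (rule cSup_upper[OF _ opnorm_bdd[OF B]]) (use wc wK wn B in auto)
  then show ?thesis using bw Npos unfolding N_def by (simp add: field_simps)
qed

lemma opnorm_quad: assumes F: "field_choice K" and B: "B \<in> carrier_mat d d"
  and u: "\<And>a. a < d \<Longrightarrow> u a \<in> K"
  shows "Re (\<Sum>a<d. cnj (u a) * (B *\<^sub>v vec d u) $ a) \<le> op_norm K B * (\<Sum>a<d. (cmod (u a))\<^sup>2)"
proof -
  define v where "v = vec d u"
  have vc: "v \<in> carrier_vec d" and vK: "vec_entries_in K v"
    using u unfolding v_def vec_entries_in_def by auto
  have Bv: "B *\<^sub>v v \<in> carrier_vec d" using B vc by simp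
  have nv: "vnorm v = L2_set (\<lambda>a. cmod (u a)) {..<d}" unfolding vnorm_def L2_set_def v_def by simp
  have dbv: "dim_vec (B *\<^sub>v v) = d" using B by simp
  have nbv: "vnorm (B *\<^sub>v v) = L2_set (\<lambda>a. cmod ((B *\<^sub>v v) $ a)) {..<d}"
    unfolding vnorm_def L2_set_def dbv by (rule refl)
  have "Re (\<Sum>a<d. cnj (u a) * (B *\<^sub>v v) $ a) \<le> cmod (\<Sum>a<d. cnj (u a) * (B *\<^sub>v v) $ a)"
    by (rule complex_Re_le_cmod)
  also have "\<dots> \<le> (\<Sum>a<d. cmod (cnj (u a) * (B *\<^sub>v v) $ a))" by (rule norm_sum)
  also have "\<dots> = (\<Sum>a<d. \<bar>cmod (u a)\<bar> * \<bar>cmod ((B *\<^sub>v v) $ a)\<bar>)" by (simp add: norm_mult)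
  also have "\<dots> \<le> vnorm v * vnorm (B *\<^sub>v v)" unfolding nv nbv by (rule L2_set_mult_ineq)
  also have "\<dots> \<le> vnorm v * (op_norm K B * vnorm v)"
    by (rule mult_left_mono[OF opnorm_vec[OF F B vc vK]]) (simp add: vnorm_def sum_nonneg)
  also have "\<dots> = op_norm K B * (vnorm v)^2" by (simp add: power2_eq_square)
  also have "(vnorm v)^2 = (\<Sum>a<d. (cmod (u a))\<^sup>2)" unfolding vnorm_def v_def
    by (simp add: sum_nonneg)
  finally show ?thesis unfolding v_def .
qed

lemma K_sum: assumes "field_choice K" "\<And>k. k \<in> S \<Longrightarrow> f k \<in> K"
  shows "sum f S \<in> K"
  using assms unfolding field_choice_def by (auto intro: sum_in_Reals)

lemma hinner_diff: assumes "hermitian d A" "M1 \<in> carrier_mat d d" "M2 \<in> carrier_mat d d"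
  shows "hinner A (M1 - M2) = hinner A M1 - hinner A M2"
proof -
  have c: "M1 - M2 \<in> carrier_mat d d" using assms(3) by (rule minus_carrier_mat)
  have "hinner A (M1 - M2) = (\<Sum>i<d. \<Sum>j<d. Re (A $$ (i,j) * (M1 - M2) $$ (j,i)))"
    by (rule hinner_herm[OF assms(1) c])
  also have "\<dots> = (\<Sum>i<d. \<Sum>j<d. Re (A $$ (i,j) * M1 $$ (j,i)) - Re (A $$ (i,j) * M2 $$ (j,i)))"
    by (intro sum.cong refl) (use assms(2,3) in \<open>simp add: right_diff_distrib del: times_complex.sel\<close>)
  also have "\<dots> = hinner A M1 - hinner A M2"
    unfolding hinner_herm[OF assms(1) assms(2)] hinner_herm[OF assms(1) assms(3)]
    by (simp only: sum_subtractf)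
  finally show ?thesis .
qed

lemma Re_ofreal_mult3: "Re (a * (complex_of_real r * b * c)) = r * Re (a * b * c)"
  by (simp add: algebra_simps)

lemma measadj_qf:
  "(\<Sum>i<n. y i * qf d (As i) u u) = Re (\<Sum>a<d. cnj (u a) * (meas_adj d n As y *\<^sub>v vec d u) $ a)"
proof -
  have "Re (\<Sum>a<d. cnj (u a) * (meas_adj d n As y *\<^sub>v vec d u) $ a)
      = (\<Sum>a<d. \<Sum>b<d. \<Sum>i<n. y i * Re (cnj (u a) * As i $$ (a,b) * u b))"
    unfolding Re_sum
  proof (intro sum.cong refl)
    fix a assume a: "a \<in> {..<d}"
    have "(meas_adj d n As y *\<^sub>v vec d u) $ a = (\<Sum>b<d. (\<Sum>i<n. complex_of_real (y i) * As i $$ (a,b)) * u b)"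
      using a unfolding meas_adj_def by (simp add: scalar_prod_def atLeast0LessThan)
    then show "Re (cnj (u a) * (meas_adj d n As y *\<^sub>v vec d u) $ a) = (\<Sum>b<d. \<Sum>i<n. y i * Re (cnj (u a) * As i $$ (a,b) * u b))"
      by (simp add: sum_distrib_left sum_distrib_right Re_sum del: times_complex.sel)
        (intro sum.cong refl, rule Re_ofreal_mult3)
  qed
  also have "\<dots> = (\<Sum>a<d. \<Sum>i<n. \<Sum>b<d. y i * Re (cnj (u a) * As i $$ (a,b) * u b))"
    by (rule sum.cong[OF refl], rule sum.swap)
  also have "\<dots> = (\<Sum>i<n. \<Sum>a<d. \<Sum>b<d. y i * Re (cnj (u a) * As i $$ (a,b) * u b))"
    by (rule sum.swap)
  also have "\<dots> = (\<Sum>i<n. y i * qf d (As i) u u)"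
    unfolding qf_def sum_distrib_left by (rule refl)
  finally show ?thesis by simp
qed

lemma crit_col:
  assumes F: "field_choice K" and hA: "\<forall>i<n. hermitian d (As i)"
    and crit: "second_order_critical K d p n As y X" and j: "j < p"
    and u: "\<And>a. a < d \<Longrightarrow> u a \<in> K"
  shows "(\<Sum>i<n. (meas As (X * adj X) i - y i) * qf d (As i) (\<lambda>a. X $$ (a,j)) u) = 0"
    and "0 \<le> (\<Sum>i<n. 8 * (qf d (As i) (\<lambda>a. X $$ (a,j)) u)^2)
              + 4 * (\<Sum>i<n. (meas As (X * adj X) i - y i) * qf d (As i) u u)"
proof -
  have X: "X \<in> carrier_mat d p" using crit unfolding second_order_critical_def by auto
  define V where "V = mat d p (\<lambda>(a,k). if k = j then u a else 0)"
  have V: "V \<in> carrier_mat d p" unfolding V_def by simp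
  have VK: "entries_in K V" unfolding V_def entries_in_def using u K_closed(6)[OF F] by auto
  define g where "g = (\<lambda>t::real. fobj n As y (X + complex_of_real t \<cdot>\<^sub>m V))"
  have gprop: "(g has_real_derivative 0) (at 0) \<and>
          (\<exists>g' s. (\<forall>t. (g has_real_derivative g' t) (at t)) \<and>
                  (g' has_real_derivative s) (at 0) \<and> 0 \<le> s)"
    using crit V VK unfolding second_order_critical_def g_def Let_def by blast
  define x where "x = (\<lambda>k a. X $$ (a,k))"
  define aX where "aX = (\<lambda>i. meas As (X * adj X) i)"
  define P where "P = (\<lambda>i. y i - aX i)"
  define b where "b = (\<lambda>i. 2 * qf d (As i) (x j) u)"
  define c where "c = (\<lambda>i. qf d (As i) u u)"
  have aXe: "aX i = (\<Sum>k<p. qf d (As i) (x k) (x k))" if i: "i < n" for i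
    unfolding aX_def meas_def x_def using meas_prod[OF hA[rule_format, OF i] X X] .
  have measT: "meas As ((X + complex_of_real t \<cdot>\<^sub>m V) * adj (X + complex_of_real t \<cdot>\<^sub>m V)) i
      = aX i + t * b i + t^2 * c i" if i: "i < n" for i t
  proof -
    define v where "v = (\<lambda>k a. if k = j then u a else (0::complex))"
    have XV: "X + complex_of_real t \<cdot>\<^sub>m V \<in> carrier_mat d p" using X V by simp
    have hi: "hermitian d (As i)" using hA i by simp
    have "meas As ((X + complex_of_real t \<cdot>\<^sub>m V) * adj (X + complex_of_real t \<cdot>\<^sub>m V)) i
       = (\<Sum>k<p. qf d (As i) (\<lambda>a. (X + complex_of_real t \<cdot>\<^sub>m V) $$ (a,k)) (\<lambda>a. (X + complex_of_real t \<cdot>\<^sub>m V) $$ (a,k)))"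
      unfolding meas_def using meas_prod[OF hi XV XV] .
    also have "\<dots> = (\<Sum>k<p. qf d (As i) (\<lambda>a. x k a + complex_of_real t * v k a) (\<lambda>a. x k a + complex_of_real t * v k a))"
    proof (intro sum.cong refl qf_cong)
      fix k a assume "k \<in> {..<p}" "a < d"
      then have ak: "a < d" "k < p" by auto
      have "(X + complex_of_real t \<cdot>\<^sub>m V) $$ (a,k) = X $$ (a,k) + (complex_of_real t \<cdot>\<^sub>m V) $$ (a,k)"
        using ak V by (intro index_add_mat) auto
      also have "\<dots> = X $$ (a,k) + complex_of_real t * V $$ (a,k)"
        using ak V by simp
      also have "V $$ (a,k) = v k a" unfolding V_def v_def using ak by simp
      finally have "(X + complex_of_real t \<cdot>\<^sub>m V) $$ (a,k) = x k a + complex_of_real t * v k a"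
        unfolding x_def .
      then show "(X + complex_of_real t \<cdot>\<^sub>m V) $$ (a,k) = x k a + complex_of_real t * v k a"
        and "(X + complex_of_real t \<cdot>\<^sub>m V) $$ (a,k) = x k a + complex_of_real t * v k a" by auto
    qed
    also have "\<dots> = (\<Sum>k<p. qf d (As i) (x k) (x k) + t * (qf d (As i) (x k) (v k) + qf d (As i) (v k) (x k)) + t^2 * qf d (As i) (v k) (v k))"
      by (simp only: qf_expand)
    also have "\<dots> = (\<Sum>k<p. qf d (As i) (x k) (x k) + (if k = j then t * b i + t^2 * c i else 0))"
    proof (intro sum.cong refl)
      fix k assume "k \<in> {..<p}"
      show "qf d (As i) (x k) (x k) + t * (qf d (As i) (x k) (v k) + qf d (As i) (v k) (x k)) + t^2 * qf d (As i) (v k) (v k)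
          = qf d (As i) (x k) (x k) + (if k = j then t * b i + t^2 * c i else 0)"
      proof (cases "k = j")
        case True
        then have "v k = u" unfolding v_def by auto
        then show ?thesis using True qf_sym[OF hi, of u "x j"] unfolding b_def c_def by simp
      next
        case False
        then have "v k = (\<lambda>a. 0)" unfolding v_def by auto
        then show ?thesis using False by (simp add: qf_zero1 qf_zero2)
      qed
    qed
    also have "\<dots> = (\<Sum>k<p. qf d (As i) (x k) (x k)) + (\<Sum>k<p. (if k = j then t * b i + t^2 * c i else 0))"
      by (rule sum.distrib)
    also have "(\<Sum>k<p. (if k = j then t * b i + t^2 * c i else 0)) = t * b i + t^2 * c i"
      using j by (simp add: sum.delta)
    also have "(\<Sum>k<p. qf d (As i) (x k) (x k)) = aX i" using aXe[OF i] by simp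
    finally show ?thesis by (simp only: add.assoc)
  qed
  have geq: "g = (\<lambda>t. \<Sum>i<n. (P i - t * b i - t^2 * c i)^2)"
  proof
    fix t
    show "g t = (\<Sum>i<n. (P i - t * b i - t^2 * c i)^2)"
      unfolding g_def fobj_def
    proof (intro sum.cong refl)
      fix i assume "i \<in> {..<n}"
      then show "(y i - meas As ((X + complex_of_real t \<cdot>\<^sub>m V) * adj (X + complex_of_real t \<cdot>\<^sub>m V)) i)^2
         = (P i - t * b i - t^2 * c i)^2"
        using measT[of i t] unfolding P_def by (simp add: algebra_simps)
    qed
  qed
  have "(g has_real_derivative 0) (at 0)" using gprop by blast
  then have "((\<lambda>t. \<Sum>i<n. (P i - t * b i - t^2 * c i)^2) has_real_derivative 0) (at 0)"
    unfolding geq .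
  then have "(\<Sum>i<n. P i * b i) = 0" by (rule deriv_first)
  then have "(\<Sum>i<n. (-2) * ((aX i - y i) * qf d (As i) (x j) u)) = 0"
    unfolding P_def b_def by (simp add: algebra_simps)
  then have "(-2) * (\<Sum>i<n. (aX i - y i) * qf d (As i) (x j) u) = 0"
    by (simp only: sum_distrib_left)
  then show "(\<Sum>i<n. (meas As (X * adj X) i - y i) * qf d (As i) (\<lambda>a. X $$ (a,j)) u) = 0"
    unfolding aX_def x_def by simp
  obtain g' s where gs: "\<forall>t. (g has_real_derivative g' t) (at t)" "(g' has_real_derivative s) (at 0)" "0 \<le> s"
    using gprop by blast
  have "s = (\<Sum>i<n. 2 * (b i)^2 - 4 * P i * c i)"
    by (rule deriv_second[OF gs(1)[unfolded geq] gs(2)])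
  also have "\<dots> = (\<Sum>i<n. 8 * (qf d (As i) (x j) u)^2) + 4 * (\<Sum>i<n. (aX i - y i) * qf d (As i) u u)"
    unfolding P_def b_def c_def sum_distrib_left sum.distrib[symmetric]
    by (intro sum.cong refl) (simp add: algebra_simps power2_eq_square)
  finally show "0 \<le> (\<Sum>i<n. 8 * (qf d (As i) (\<lambda>a. X $$ (a,j)) u)^2)
              + 4 * (\<Sum>i<n. (meas As (X * adj X) i - y i) * qf d (As i) u u)"
    using gs(3) unfolding aX_def x_def by simp
qed

theorem lemma1:
  fixes K :: "complex set" and d n p r :: nat
    and As :: "nat \<Rightarrow> complex mat" and Zs Xs X R :: "complex mat"
    and \<xi> y :: "nat \<Rightarrow> real"
  assumes F: "field_choice K"
    and A_psd: "\<forall>i<n. psd K d (As i) \<and> entries_in K (As i)"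
    and Z_psd: "psd K d Zs" and Z_K: "entries_in K Zs"
    and Z_rank: "vec_space.rank d Zs = r" and r_pos: "r \<ge> 1"
    and y_def: "\<forall>i<n. y i = meas As Zs i + \<xi> i"
    and Xs_dim: "Xs \<in> carrier_mat d r" and Xs_K: "entries_in K Xs"
    and Z_fac: "Zs = Xs * adj Xs"
    and crit: "second_order_critical K d p n As y X"
    and R_dim: "R \<in> carrier_mat p r" and R_K: "entries_in K R"
  shows "(\<Sum>i<n. (meas As (X * adj X - Zs) i)\<^sup>2)
           \<le> (\<Sum>i<n. \<xi> i * meas As (X * adj X - Zs) i)
              + 2 / (real p + 2) * (\<Sum>i<n. y i * meas As ((Xs - X * R) * adj (Xs - X * R)) i)
       \<and> (\<Sum>i<n. \<xi> i * meas As (X * adj X - Zs) i)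
              + 2 / (real p + 2) * (\<Sum>i<n. y i * meas As ((Xs - X * R) * adj (Xs - X * R)) i)
           \<le> (\<Sum>i<n. \<xi> i * meas As (X * adj X - Zs) i)
              + 2 * op_norm K (meas_adj d n As y) / (real p + 2) * frob_sq (Xs - X * R)"
proof -
  have hA: "\<forall>i<n. hermitian d (As i)" using A_psd unfolding psd_def by auto
  have X: "X \<in> carrier_mat d p" and XK: "entries_in K X"
    using crit unfolding second_order_critical_def by auto
  have Zc: "Zs \<in> carrier_mat d d" using Z_psd unfolding psd_def hermitian_def by auto
  define x where "x = (\<lambda>k a. X $$ (a,k))"
  define z where "z = (\<lambda>l a. Xs $$ (a,l))"
  define D where "D = Xs - X * R"
  have XR: "X * R \<in> carrier_mat d r" using X R_dim by simp
  have Dc: "D \<in> carrier_mat d r" unfolding D_def using XR by (rule minus_carrier_mat)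
  define \<delta> where "\<delta> = (\<lambda>l a. D $$ (a,l))"
  define q where "q = (\<lambda>i. qf d (As i))"
  define aX where "aX = (\<lambda>i. meas As (X * adj X) i)"
  define \<zeta> where "\<zeta> = (\<lambda>i. meas As Zs i)"
  define e where "e = (\<lambda>i. aX i - y i)"
  define M where "M = (\<lambda>i. meas As (D * adj D) i)"
  define m where "m = (\<lambda>i. meas As (X * adj X - Zs) i)"
  define B where "B = meas_adj d n As y"
  have Bc: "B \<in> carrier_mat d d" unfolding B_def meas_adj_def by simp
  have xK: "x k a \<in> K" if "k < p" "a < d" for k a
    using XK X that unfolding entries_in_def x_def by auto
  have zK: "z l a \<in> K" if "l < r" "a < d" for l a
    using Xs_K Xs_dim that unfolding entries_in_def z_def by auto
  have RK: "R $$ (k,l) \<in> K" if "k < p" "l < r" for k l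
    using R_K R_dim that unfolding entries_in_def by auto
  have \<delta>e: "\<delta> l a = z l a - (\<Sum>k<p. R $$ (k,l) * x k a)" if l: "l < r" and a: "a < d" for l a
  proof -
    have "\<delta> l a = Xs $$ (a,l) - (X * R) $$ (a,l)"
      unfolding \<delta>_def D_def using XR l a by (intro index_minus_mat) auto
    also have "(X * R) $$ (a,l) = (\<Sum>k<p. X $$ (a,k) * R $$ (k,l))"
      using X R_dim l a by (simp add: scalar_prod_def atLeast0LessThan)
    finally show ?thesis unfolding z_def x_def by (simp add: mult.commute)
  qed
  have wK: "(\<Sum>k<p. R $$ (k,l) * x k a) \<in> K" if "l < r" "a < d" for l a
    by (rule K_sum[OF F]) (use that in \<open>auto intro!: K_closed(3)[OF F] RK xK\<close>)
  have \<delta>K: "\<delta> l a \<in> K" if "l < r" "a < d" for l a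
    unfolding \<delta>e[OF that] using that by (intro K_closed(2)[OF F] zK wK)
  have aXe: "aX i = (\<Sum>k<p. q i (x k) (x k))" if i: "i < n" for i
    unfolding aX_def meas_def q_def x_def using meas_prod[OF hA[rule_format, OF i] X X] .
  have \<zeta>e: "\<zeta> i = (\<Sum>l<r. q i (z l) (z l))" if i: "i < n" for i
    unfolding \<zeta>_def meas_def q_def z_def Z_fac using meas_prod[OF hA[rule_format, OF i] Xs_dim Xs_dim] .
  have Me: "M i = (\<Sum>l<r. q i (\<delta> l) (\<delta> l))" if i: "i < n" for i
    unfolding M_def meas_def q_def \<delta>_def using meas_prod[OF hA[rule_format, OF i] Dc Dc] .
  have me: "m i = aX i - \<zeta> i" if i: "i < n" for i
  proof -
    have "X * adj X \<in> carrier_mat d d" using X unfolding adj_def by auto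
    then show ?thesis unfolding m_def aX_def \<zeta>_def meas_def
      by (rule hinner_diff[OF hA[rule_format, OF i] _ Zc])
  qed
  have ye: "y i = \<zeta> i + \<xi> i" if "i < n" for i
    using y_def that unfolding \<zeta>_def by simp
  have F1: "(\<Sum>i<n. e i * q i (x j) u) = 0" if "j < p" "\<And>a. a < d \<Longrightarrow> u a \<in> K" for j u
    using crit_col(1)[OF F hA crit that] unfolding e_def aX_def q_def x_def .
  have F2: "0 \<le> (\<Sum>i<n. 8 * (q i (x j) u)^2) + 4 * (\<Sum>i<n. e i * q i u u)"
    if "j < p" "\<And>a. a < d \<Longrightarrow> u a \<in> K" for j u
    using crit_col(2)[OF F hA crit that] unfolding e_def aX_def q_def x_def .
  have CS: "(q i (x j) u)^2 \<le> q i (x j) (x j) * q i u u"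
    if "i < n" "j < p" "\<And>a. a < d \<Longrightarrow> u a \<in> K" for i j u
    unfolding q_def using that A_psd by (intro qf_cs[OF _ F]) (auto intro: xK)
  have F2': "0 \<le> 8 * (\<Sum>i<n. aX i * q i u u) + 4 * real p * (\<Sum>i<n. e i * q i u u)"
    if u: "\<And>a. a < d \<Longrightarrow> u a \<in> K" for u
  proof -
    define E where "E = (\<Sum>i<n. e i * q i u u)"
    have "0 \<le> (\<Sum>j<p. (\<Sum>i<n. 8 * (q i (x j) (x j) * q i u u)) + 4 * E)"
    proof (rule sum_nonneg)
      fix j assume j: "j \<in> {..<p}"
      have "0 \<le> (\<Sum>i<n. 8 * (q i (x j) u)^2) + 4 * E" unfolding E_def using F2 j u by auto
      also have "(\<Sum>i<n. 8 * (q i (x j) u)^2) \<le> (\<Sum>i<n. 8 * (q i (x j) (x j) * q i u u))"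
        using CS j u by (intro sum_mono) auto
      finally show "0 \<le> (\<Sum>i<n. 8 * (q i (x j) (x j) * q i u u)) + 4 * E" by simp
    qed
    also have "\<dots> = (\<Sum>j<p. \<Sum>i<n. 8 * (q i (x j) (x j) * q i u u)) + real p * (4 * E)"
      by (simp add: sum.distrib)
    also have "(\<Sum>j<p. \<Sum>i<n. 8 * (q i (x j) (x j) * q i u u)) = (\<Sum>i<n. \<Sum>j<p. 8 * (q i (x j) (x j) * q i u u))"
      by (rule sum.swap)
    also have "\<dots> = (\<Sum>i<n. 8 * (aX i * q i u u))"
    proof (rule sum.cong[OF refl])
      fix i assume "i \<in> {..<n}"
      then have "aX i = (\<Sum>k<p. q i (x k) (x k))" using aXe by simp
      then show "(\<Sum>j<p. 8 * (q i (x j) (x j) * q i u u)) = 8 * (aX i * q i u u)"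
        by (simp add: sum_distrib_left sum_distrib_right mult.assoc)
    qed
    also have "\<dots> = 8 * (\<Sum>i<n. aX i * q i u u)" by (simp add: sum_distrib_left)
    finally show ?thesis unfolding E_def by (simp add: mult.assoc)
  qed
  have Qw: "(\<Sum>i<n. e i * q i (\<lambda>a. \<Sum>k<p. R $$ (k,l) * x k a) v) = 0"
    if l: "l < r" and v: "\<And>a. a < d \<Longrightarrow> v a \<in> K" for l v
  proof -
    have "(\<Sum>i<n. e i * q i (\<lambda>a. \<Sum>k<p. R $$ (k,l) * x k a) v)
        = (\<Sum>i<n. e i * (\<Sum>k<p. q i (x k) (\<lambda>a. cnj (R $$ (k,l)) * v a)))"
      unfolding q_def qf_sum1 qf_scale1 by (rule refl)
    also have "\<dots> = (\<Sum>k<p. \<Sum>i<n. e i * q i (x k) (\<lambda>a. cnj (R $$ (k,l)) * v a))"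
      unfolding sum_distrib_left by (rule sum.swap)
    also have "\<dots> = 0"
    proof (rule sum.neutral, rule ballI)
      fix k assume k: "k \<in> {..<p}"
      show "(\<Sum>i<n. e i * q i (x k) (\<lambda>a. cnj (R $$ (k,l)) * v a)) = 0"
        using k l by (intro F1) (auto intro!: K_closed(3)[OF F] K_closed(4)[OF F] RK v)
    qed
    finally show ?thesis .
  qed
  have Q0: "(\<Sum>i<n. e i * q i (\<delta> l) (\<delta> l)) = (\<Sum>i<n. e i * q i (z l) (z l))" if l: "l < r" for l
  proof -
    define w where "w = (\<lambda>a. \<Sum>k<p. R $$ (k,l) * x k a)"
    have zwK: "(\<lambda>a. z l a - w a) a \<in> K" if "a < d" for a
      unfolding w_def using l that by (auto intro!: K_closed(2)[OF F] zK wK)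
    have "(\<Sum>i<n. e i * q i (\<delta> l) (\<delta> l)) = (\<Sum>i<n. e i * q i (\<lambda>a. z l a - w a) (\<lambda>a. z l a - w a))"
      unfolding q_def w_def by (intro sum.cong refl arg_cong2[where f="(*)"] qf_cong) (use l \<delta>e in auto)
    also have "\<dots> = (\<Sum>i<n. e i * q i (z l) (z l)) - (\<Sum>i<n. e i * q i w (z l)) - (\<Sum>i<n. e i * q i w (\<lambda>a. z l a - w a))"
    proof -
      have "e i * q i (\<lambda>a. z l a - w a) (\<lambda>a. z l a - w a) = e i * q i (z l) (z l) - e i * q i w (z l) - e i * q i w (\<lambda>a. z l a - w a)"
        if "i \<in> {..<n}" for i
      proof -
        have "q i (\<lambda>a. z l a - w a) (\<lambda>a. z l a - w a) = q i (z l) (z l) - q i (z l) w - q i w (\<lambda>a. z l a - w a)"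
          unfolding q_def qf_diff1 qf_diff2 by simp
        moreover have "q i (z l) w = q i w (z l)" unfolding q_def using qf_sym hA that by auto
        ultimately have h1: "q i (\<lambda>a. z l a - w a) (\<lambda>a. z l a - w a) = q i (z l) (z l) - q i w (z l) - q i w (\<lambda>a. z l a - w a)"
          by linarith
        show ?thesis unfolding h1 by (simp only: right_diff_distrib)
      qed
      then show ?thesis by (simp add: sum_subtractf)
    qed
    also have "(\<Sum>i<n. e i * q i w (z l)) = 0" unfolding w_def using l zK by (intro Qw) auto
    also have "(\<Sum>i<n. e i * q i w (\<lambda>a. z l a - w a)) = 0" unfolding w_def using l zwK unfolding w_def by (intro Qw) auto
    finally show ?thesis by simp
  qed
  have swapM: "(\<Sum>i<n. f i * (\<Sum>l<r. g i l)) = (\<Sum>l<r. \<Sum>i<n. f i * g i l)" for f :: "nat \<Rightarrow> real" and g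
    unfolding sum_distrib_left by (rule sum.swap)
  have T: "(\<Sum>i<n. e i * M i) = (\<Sum>i<n. e i * \<zeta> i)"
  proof -
    have "(\<Sum>i<n. e i * M i) = (\<Sum>i<n. e i * (\<Sum>l<r. q i (\<delta> l) (\<delta> l)))" using Me by simp
    also have "\<dots> = (\<Sum>l<r. \<Sum>i<n. e i * q i (\<delta> l) (\<delta> l))" by (rule swapM)
    also have "\<dots> = (\<Sum>l<r. \<Sum>i<n. e i * q i (z l) (z l))" using Q0 by simp
    also have "\<dots> = (\<Sum>i<n. e i * (\<Sum>l<r. q i (z l) (z l)))" by (rule swapM[symmetric])
    also have "\<dots> = (\<Sum>i<n. e i * \<zeta> i)" using \<zeta>e by simp
    finally show ?thesis .
  qed
  have AX0: "(\<Sum>i<n. e i * aX i) = 0"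
  proof -
    have "(\<Sum>i<n. e i * aX i) = (\<Sum>i<n. e i * (\<Sum>k<p. q i (x k) (x k)))" using aXe by simp
    also have "\<dots> = (\<Sum>k<p. \<Sum>i<n. e i * q i (x k) (x k))"
      unfolding sum_distrib_left by (rule sum.swap)
    also have "\<dots> = 0" using F1 xK by (intro sum.neutral) auto
    finally show ?thesis .
  qed
  have F3: "0 \<le> 8 * (\<Sum>i<n. aX i * M i) + 4 * real p * (\<Sum>i<n. e i * M i)"
  proof -
    have "0 \<le> (\<Sum>l<r. 8 * (\<Sum>i<n. aX i * q i (\<delta> l) (\<delta> l)) + 4 * real p * (\<Sum>i<n. e i * q i (\<delta> l) (\<delta> l)))"
      using F2' \<delta>K by (intro sum_nonneg) auto
    also have "\<dots> = 8 * (\<Sum>l<r. \<Sum>i<n. aX i * q i (\<delta> l) (\<delta> l)) + 4 * real p * (\<Sum>l<r. \<Sum>i<n. e i * q i (\<delta> l) (\<delta> l))"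
      by (simp add: sum.distrib sum_distrib_left)
    also have "(\<Sum>l<r. \<Sum>i<n. aX i * q i (\<delta> l) (\<delta> l)) = (\<Sum>i<n. aX i * M i)"
      using Me swapM[of aX] by simp
    also have "(\<Sum>l<r. \<Sum>i<n. e i * q i (\<delta> l) (\<delta> l)) = (\<Sum>i<n. e i * M i)"
      using Me swapM[of e] by simp
    finally show ?thesis .
  qed
  define TT where "TT = (\<Sum>i<n. e i * M i)"
  define S1 where "S1 = (\<Sum>i<n. aX i * M i)"
  have summ: "(\<Sum>i<n. (m i)^2) = (\<Sum>i<n. \<xi> i * m i) - TT"
  proof -
    have "(\<Sum>i<n. (m i)^2) = (\<Sum>i<n. \<xi> i * m i + (e i * aX i - e i * \<zeta> i))"
    proof (rule sum.cong[OF refl])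
      fix i assume "i \<in> {..<n}"
      then have i: "i < n" by simp
      have h1: "e i = m i - \<xi> i" using me[OF i] ye[OF i] unfolding e_def by simp
      have h2: "aX i - \<zeta> i = m i" using me[OF i] by simp
      have "e i * aX i - e i * \<zeta> i = e i * (aX i - \<zeta> i)" by (simp only: right_diff_distrib)
      also have "\<dots> = (m i - \<xi> i) * m i" unfolding h1 h2 ..
      finally show "(m i)^2 = \<xi> i * m i + (e i * aX i - e i * \<zeta> i)"
        by (simp add: power2_eq_square algebra_simps)
    qed
    also have "\<dots> = (\<Sum>i<n. \<xi> i * m i) + ((\<Sum>i<n. e i * aX i) - (\<Sum>i<n. e i * \<zeta> i))"
      by (simp add: sum.distrib sum_subtractf)
    finally show ?thesis using AX0 T unfolding TT_def by simp
  qed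
  have sumy: "(\<Sum>i<n. y i * M i) = S1 - TT"
  proof -
    have "(\<Sum>i<n. y i * M i) = (\<Sum>i<n. aX i * M i - e i * M i)"
      unfolding e_def by (intro sum.cong refl) (simp add: algebra_simps)
    then show ?thesis unfolding S1_def TT_def by (simp add: sum_subtractf)
  qed
  have G1: "(\<Sum>i<n. (m i)^2) \<le> (\<Sum>i<n. \<xi> i * m i) + 2 / (real p + 2) * (\<Sum>i<n. y i * M i)"
  proof -
    have F3': "0 \<le> 2 * S1 + real p * TT" using F3 unfolding S1_def TT_def by simp
    have "2 / (real p + 2) * (S1 - TT) + TT = (2 * S1 + real p * TT) / (real p + 2)"
      by (simp add: field_simps)
    also have "\<dots> \<ge> 0" using F3' by simp
    finally have "0 \<le> 2 / (real p + 2) * (S1 - TT) + TT" .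
    then show ?thesis unfolding summ sumy by simp
  qed
  have G2: "(\<Sum>i<n. y i * M i) \<le> op_norm K B * frob_sq D"
  proof -
    have "(\<Sum>i<n. y i * M i) = (\<Sum>i<n. y i * (\<Sum>l<r. q i (\<delta> l) (\<delta> l)))" using Me by simp
    also have "\<dots> = (\<Sum>l<r. \<Sum>i<n. y i * q i (\<delta> l) (\<delta> l))" by (rule swapM)
    also have "\<dots> = (\<Sum>l<r. Re (\<Sum>a<d. cnj (\<delta> l a) * (B *\<^sub>v vec d (\<delta> l)) $ a))"
      unfolding q_def B_def measadj_qf by (rule refl)
    also have "\<dots> \<le> (\<Sum>l<r. op_norm K B * (\<Sum>a<d. (cmod (\<delta> l a))\<^sup>2))"
      using \<delta>K by (intro sum_mono opnorm_quad[OF F Bc]) auto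
    also have "\<dots> = op_norm K B * (\<Sum>a<d. \<Sum>l<r. (cmod (\<delta> l a))\<^sup>2)"
      by (simp add: sum_distrib_left sum.swap[of _ "{..<d}"])
    also have "(\<Sum>a<d. \<Sum>l<r. (cmod (\<delta> l a))\<^sup>2) = frob_sq D"
      unfolding frob_sq_def \<delta>_def using Dc by simp
    finally show ?thesis .
  qed
  have G2': "(\<Sum>i<n. \<xi> i * m i) + 2 / (real p + 2) * (\<Sum>i<n. y i * M i)
      \<le> (\<Sum>i<n. \<xi> i * m i) + 2 * op_norm K B / (real p + 2) * frob_sq D"
  proof -
    have "2 / (real p + 2) * (\<Sum>i<n. y i * M i) \<le> 2 / (real p + 2) * (op_norm K B * frob_sq D)"
      using G2 by (intro mult_left_mono) auto
    then show ?thesis by simp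
  qed
  show ?thesis using G1 G2' unfolding m_def M_def D_def B_def by blast
qed

end
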